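(* Let $M,K\ge 1$, let $\mathbf{H}=[\mathbf{h}_{:1},\dots,\mathbf{h}_{:K}]\in\mathbb{C}^{M\times K}$, let $P>0$, $N_0>0$, and let each user $k\in\{1,\dots,K\}$ have a rate $r_k\ge 0$. Let $\hat S\subseteq\{1,\dots,K\}$ and let $o\neq p$ be two users not in $\hat S$, with $C=\{o,p\}$. Suppose $$R_o^{\hat S}\ge r_o,\qquad R_p^{\hat S}\ge r_p,\qquad R_C^{\hat S}<r_o+r_p .$$ Then, given that the users in $\hat S$ are in outage, both $o$ and $p$ are in outage; that is, there is no set $S^*\subseteq\{1,\dots,K\}\setminus\hat S$ with $S^*\cap\{o,p\}\neq\emptyset$ such that for every $S\subseteq S^*$, $$\sum_{k\in S}r_k\le \log_2\det\!\Big(\mathbf{I}_M+\tfrac{P}{N_0}\mathbf{H}_{:S}\mathbf{H}_{:S}^{\mathrm H}\big(\mathbf{I}_M+\tfrac{P}{N_0}\mathbf{H}_{:\bar S}\mathbf{H}_{:\bar S}^{\mathrm H}\big)^{-1}\Big),\qquad \bar S=\{1,\dots,K\}\setminus S^* .$$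
   Context: For a set $A\subseteq\{1,\dots,K\}$, $\mathbf{H}_{:A}$ denotes the $M\times|A|$ submatrix of $\mathbf{H}$ with columns $\{\mathbf{h}_{:k}:k\in A\}$ (for $A=\emptyset$ the term $\mathbf{H}_{:A}\mathbf{H}_{:A}^{\mathrm H}$ is the zero matrix), and the superscript $\mathrm H$ is conjugate transpose. For sets $X,Y\subseteq\{1,\dots,K\}$, $R_X^{Y}=\log_2\det\big(\mathbf{I}_M+\frac{P}{N_0}\mathbf{H}_{:X}\mathbf{H}_{:X}^{\mathrm H}(\mathbf{I}_M+\frac{P}{N_0}\mathbf{H}_{:Y}\mathbf{H}_{:Y}^{\mathrm H})^{-1}\big)$ is the achievable (sum) rate of the users in $X$ under interference from the users in $Y$; for a single user $x$ write $R_x^Y=R_{\{x\}}^Y$. A set $S^*$ of users satisfying the displayed condition for all $S\subseteq S^*$ is a set of users that can all be successfully decoded (by successive and/or joint group decoding) at their rates while the remaining users $\{1,\dots,K\}\setminus S^*$ are treated as noise; a user belonging to no such set is said to be in outage. This models a Gaussian multiple-access channel $\mathbf{y}=\mathbf{H}\mathbf{x}+\mathbf{z}$ with $K$ single-antenna transmitters each of power $P$, an $M$-antenna receiver, and noise $\mathcal{CN}(0,N_0\mathbf{I}_M)$. *)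

theory Defs
  imports "Jordan_Normal_Form.Schur_Decomposition" "Jordan_Normal_Form.Gauss_Jordan_Elimination"
    "Jordan_Normal_Form.Determinant"
begin

text \<open>Users are numbered 1..K; user k corresponds to column k-1 of the M x K
  matrix H (Jordan_Normal_Form matrices are 0-indexed).\<close>

definition Hcols :: "nat \<Rightarrow> complex mat \<Rightarrow> nat set \<Rightarrow> complex mat" where
  "Hcols M H A = mat_of_cols M (map (\<lambda>k. col H (k - 1)) (sorted_list_of_set A))"

definition gram :: "nat \<Rightarrow> complex mat \<Rightarrow> nat set \<Rightarrow> complex mat" where
  "gram M H A = Hcols M H A * mat_adjoint (Hcols M H A)"

text \<open>R_X^Y = log2 det(I + P/N0 H_X H_X^H (I + P/N0 H_Y H_Y^H)^{-1}).
  The determinant is real and positive; we take its real part.\<close>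
definition rate :: "nat \<Rightarrow> complex mat \<Rightarrow> real \<Rightarrow> real \<Rightarrow> nat set \<Rightarrow> nat set \<Rightarrow> real" where
  "rate M H P N0 X Y =
     log 2 (Re (det (1\<^sub>m M + (complex_of_real (P / N0) \<cdot>\<^sub>m gram M H X) *
        the (mat_inverse (1\<^sub>m M + complex_of_real (P / N0) \<cdot>\<^sub>m gram M H Y)))))"

end

theory Submission
  imports Defs
begin

lemma det_rank_one:
  fixes B Bi V W :: "complex mat"
  assumes B: "B \<in> carrier_mat n n" and Bi: "Bi \<in> carrier_mat n n" and BiB: "Bi * B = 1\<^sub>m n"
    and V: "V \<in> carrier_mat n 1" and W: "W \<in> carrier_mat 1 n"
  shows "det (B + V * W) = det B * (1 + (W * Bi * V) $$ (0,0))"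
proof -
  define X where "X = four_block_mat B (-V) W (1\<^sub>m 1)"
  define L where "L = four_block_mat (1\<^sub>m n) (0\<^sub>m n 1) (-(W*Bi)) (1\<^sub>m 1)"
  define R where "R = four_block_mat (1\<^sub>m n) (0\<^sub>m n 1) (-W) (1\<^sub>m 1)"
  have WBi: "W * Bi \<in> carrier_mat 1 n" using W Bi by auto
  have X: "X \<in> carrier_mat (n+1) (n+1)" unfolding X_def using B V W by auto
  have L: "L \<in> carrier_mat (n+1) (n+1)" unfolding L_def using WBi by auto
  have R: "R \<in> carrier_mat (n+1) (n+1)" unfolding R_def using W by auto
  have dL: "det L = 1" unfolding L_def
    using det_four_block_mat_upper_right_zero[OF one_carrier_mat refl uminus_carrier_mat[OF WBi] one_carrier_mat] by simp
  have dR: "det R = 1" unfolding R_def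
    using det_four_block_mat_upper_right_zero[OF one_carrier_mat refl uminus_carrier_mat[OF W] one_carrier_mat] by simp
  have e1: "- (W * Bi) * B + 1\<^sub>m 1 * W = 0\<^sub>m 1 n"
  proof -
    have "- (W * Bi) * B = - (W * (Bi * B))"
      unfolding assoc_mult_mat[OF W Bi B, symmetric] by (rule uminus_mult_left_mat, insert W Bi B, auto)
    also have "\<dots> = - W" using BiB W by simp
    finally show ?thesis using W by simp
  qed
  have e2: "- (W * Bi) * - V + 1\<^sub>m 1 * 1\<^sub>m 1 = W * Bi * V + 1\<^sub>m 1"
    using W Bi V by simp
  have LX: "L * X = four_block_mat B (-V) (0\<^sub>m 1 n) (W * Bi * V + 1\<^sub>m 1)"
    unfolding L_def X_def
    apply (subst mult_four_block_mat[OF one_carrier_mat zero_carrier_mat uminus_carrier_mat[OF WBi] one_carrier_mat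
       B uminus_carrier_mat[OF V] W one_carrier_mat])
    using B V W WBi e1 e2 by auto
  have XR: "X * R = four_block_mat (B + V * W) (-V) (0\<^sub>m 1 n) (1\<^sub>m 1)"
    unfolding R_def X_def
    apply (subst mult_four_block_mat[OF B uminus_carrier_mat[OF V] W one_carrier_mat
       one_carrier_mat zero_carrier_mat uminus_carrier_mat[OF W] one_carrier_mat])
    using B V W by auto
  have "det (L * X) = det B * det (W * Bi * V + 1\<^sub>m 1)"
    unfolding LX by (rule det_four_block_mat_lower_left_zero, insert B V W Bi, auto)
  moreover have "det (X * R) = det (B + V * W)"
    unfolding XR by (subst det_four_block_mat_lower_left_zero[of _ n _ 1], insert B V W, auto)
  moreover have "det (L * X) = det X" using det_mult[OF L X] dL by simp
  moreover have "det (X * R) = det X" using det_mult[OF X R] dR by simp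
  moreover have "det (W * Bi * V + 1\<^sub>m 1) = 1 + (W * Bi * V) $$ (0,0)"
    by (subst det_single, insert W Bi V, auto)
  ultimately show ?thesis by simp
qed

lemma gram_carrier: "gram M H S \<in> carrier_mat M M"
  unfolding gram_def Hcols_def mat_adjoint_def by auto

lemma gram_entry:
  assumes "finite S" "i < M" "j < M" "dim_row H = M"
  shows "gram M H S $$ (i,j) = (\<Sum>k\<in>S. H $$ (i, k-1) * cnj (H $$ (j, k-1)))"
proof -
  let ?xs = "sorted_list_of_set S"
  have "gram M H S $$ (i,j) = (\<Sum>l<length ?xs. H $$ (i, ?xs!l - 1) * cnj (H $$ (j, ?xs!l - 1)))"
    unfolding gram_def Hcols_def mat_adjoint_def using assms
    by (auto simp: scalar_prod_def mat_of_cols_index mat_of_rows_index col_def intro!: sum.cong)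
  also have "\<dots> = (\<Sum>k\<leftarrow>?xs. H $$ (i, k - 1) * cnj (H $$ (j, k - 1)))"
    by (simp add: sum_list_sum_nth atLeast0LessThan)
  also have "\<dots> = (\<Sum>k\<in>S. H $$ (i, k-1) * cnj (H $$ (j, k-1)))"
    using assms(1) by (simp add: sum_list_distinct_conv_sum_set)
  finally show ?thesis .
qed

definition Bm :: "nat \<Rightarrow> complex mat \<Rightarrow> real \<Rightarrow> nat set \<Rightarrow> complex mat" where
  "Bm M H c S = 1\<^sub>m M + complex_of_real c \<cdot>\<^sub>m gram M H S"

definition sesq :: "nat \<Rightarrow> complex mat \<Rightarrow> (nat \<Rightarrow> complex) \<Rightarrow> (nat \<Rightarrow> complex) \<Rightarrow> complex" where
  "sesq M A x z = (\<Sum>i<M. \<Sum>j<M. cnj (x i) * A $$ (i,j) * z j)"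

lemma Bm_carrier: "Bm M H c S \<in> carrier_mat M M"
  unfolding Bm_def using gram_carrier by auto

lemma Bm_entry:
  assumes "finite S" "i < M" "j < M" "dim_row H = M"
  shows "Bm M H c S $$ (i,j) = (if i = j then 1 else 0) + complex_of_real c * (\<Sum>k\<in>S. H $$ (i, k-1) * cnj (H $$ (j, k-1)))"
  unfolding Bm_def using assms gram_carrier[of M H S] by (simp add: gram_entry)

lemma Bm_herm:
  assumes "finite S" "i < M" "j < M" "dim_row H = M"
  shows "Bm M H c S $$ (j,i) = cnj (Bm M H c S $$ (i,j))"
  using assms by (simp add: Bm_entry mult.commute)

definition qr :: "nat \<Rightarrow> complex mat \<Rightarrow> real \<Rightarrow> nat set \<Rightarrow> (nat \<Rightarrow> complex) \<Rightarrow> real" where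
  "qr M H c S x = (\<Sum>i<M. (cmod (x i))^2) + c * (\<Sum>k\<in>S. (cmod (\<Sum>j<M. cnj (H $$ (j,k-1)) * x j))^2)"

lemma sesq_Bm:
  assumes "finite S" "dim_row H = M"
  shows "sesq M (Bm M H c S) x x = complex_of_real (qr M H c S x)"
proof -
  let ?s = "\<lambda>k. (\<Sum>j<M. cnj (H $$ (j,k-1)) * x j)"
  have ee: "\<And>i j. i<M \<Longrightarrow> j<M \<Longrightarrow> cnj (x i) * Bm M H c S $$ (i,j) * x j =
      cnj (x i) * (if i = j then 1 else 0) * x j +
      (\<Sum>k\<in>S. complex_of_real c * ((cnj (x i) * H $$ (i, k-1)) * (cnj (H $$ (j, k-1)) * x j)))"
    using assms by (simp add: Bm_entry distrib_left distrib_right sum_distrib_left sum_distrib_right mult_ac)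
  have e: "sesq M (Bm M H c S) x x =
     (\<Sum>i<M. \<Sum>j<M. cnj (x i) * (if i = j then 1 else 0) * x j) +
     (\<Sum>i<M. \<Sum>j<M. \<Sum>k\<in>S. complex_of_real c * ((cnj (x i) * H $$ (i, k-1)) * (cnj (H $$ (j, k-1)) * x j)))"
    unfolding sesq_def by (simp add: ee sum.distrib)
  have e1: "(\<Sum>i<M. \<Sum>j<M. cnj (x i) * (if i = j then 1 else 0) * x j) = (\<Sum>i<M. complex_of_real ((cmod (x i))^2))"
  proof (rule sum.cong[OF refl])
    fix i assume i: "i \<in> {..<M}"
    have "(\<Sum>j<M. cnj (x i) * (if i = j then 1 else 0) * x j) = (\<Sum>j<M. if j = i then cnj (x i) * x i else 0)"
      by (rule sum.cong) auto
    also have "\<dots> = cnj (x i) * x i" using i by simp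
    also have "\<dots> = complex_of_real ((cmod (x i))^2)" by (metis complex_norm_square mult.commute)
    finally show "(\<Sum>j<M. cnj (x i) * (if i = j then 1 else 0) * x j) = complex_of_real ((cmod (x i))^2)" .
  qed
  have e2: "(\<Sum>i<M. \<Sum>j<M. \<Sum>k\<in>S. complex_of_real c * ((cnj (x i) * H $$ (i, k-1)) * (cnj (H $$ (j, k-1)) * x j)))
      = (\<Sum>k\<in>S. complex_of_real c * ((\<Sum>i<M. cnj (x i) * H $$ (i, k-1)) * ?s k))"
  proof -
    have "(\<Sum>i<M. \<Sum>j<M. \<Sum>k\<in>S. complex_of_real c * ((cnj (x i) * H $$ (i, k-1)) * (cnj (H $$ (j, k-1)) * x j)))
       = (\<Sum>i<M. \<Sum>k\<in>S. \<Sum>j<M. complex_of_real c * ((cnj (x i) * H $$ (i, k-1)) * (cnj (H $$ (j, k-1)) * x j)))"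
      by (rule sum.cong, simp, rule sum.swap)
    also have "\<dots> = (\<Sum>k\<in>S. \<Sum>i<M. \<Sum>j<M. complex_of_real c * ((cnj (x i) * H $$ (i, k-1)) * (cnj (H $$ (j, k-1)) * x j)))"
      by (rule sum.swap)
    also have "\<dots> = (\<Sum>k\<in>S. complex_of_real c * ((\<Sum>i<M. cnj (x i) * H $$ (i, k-1)) * ?s k))"
      by (rule sum.cong[OF refl], simp only: sum_product, simp only: sum_distrib_left mult.assoc)
    finally show ?thesis .
  qed
  have e3: "\<And>k. (\<Sum>i<M. cnj (x i) * H $$ (i, k-1)) * ?s k = complex_of_real ((cmod (?s k))^2)"
  proof -
    fix k
    have "(\<Sum>i<M. cnj (x i) * H $$ (i, k-1)) = cnj (?s k)" by (simp add: mult.commute)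
    then show "(\<Sum>i<M. cnj (x i) * H $$ (i, k-1)) * ?s k = complex_of_real ((cmod (?s k))^2)"
      by (simp only: complex_norm_square mult.commute)
  qed
  show ?thesis unfolding e e1 e2 e3 qr_def by (simp add: sum_distrib_left)
qed

lemma qr_nonneg: "c \<ge> 0 \<Longrightarrow> qr M H c S x \<ge> 0"
  unfolding qr_def by (intro add_nonneg_nonneg mult_nonneg_nonneg sum_nonneg) auto

lemma qr_mono: "c \<ge> 0 \<Longrightarrow> finite Z \<Longrightarrow> Y \<subseteq> Z \<Longrightarrow> qr M H c Y x \<le> qr M H c Z x"
  unfolding qr_def by (intro add_left_mono mult_left_mono sum_mono2) auto

lemma sesq_herm:
  assumes "\<And>i j. i < M \<Longrightarrow> j < M \<Longrightarrow> A $$ (j,i) = cnj (A $$ (i,j))"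
  shows "sesq M A x z = cnj (sesq M A z x)"
proof -
  have "cnj (sesq M A z x) = (\<Sum>i<M. \<Sum>j<M. z i * A $$ (j,i) * cnj (x j))"
    unfolding sesq_def using assms[symmetric] by (simp add: cnj_sum)
  also have "\<dots> = (\<Sum>j<M. \<Sum>i<M. z i * A $$ (j,i) * cnj (x j))" by (rule sum.swap)
  also have "\<dots> = sesq M A x z" unfolding sesq_def by (simp add: mult_ac)
  finally show ?thesis by simp
qed

lemma sesq_diff:
  "sesq M A (\<lambda>i. a i - b i) (\<lambda>i. a i - b i) = sesq M A a a - sesq M A a b - sesq M A b a + sesq M A b b"
proof -
  have t: "\<And>i j. cnj (a i - b i) * A $$ (i,j) * (a j - b j) =
     cnj (a i) * A $$ (i,j) * a j - cnj (a i) * A $$ (i,j) * b j - cnj (b i) * A $$ (i,j) * a j + cnj (b i) * A $$ (i,j) * b j"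
    by (simp add: algebra_simps)
  show ?thesis unfolding sesq_def by (simp only: t sum.distrib sum_subtractf)
qed

lemma sesq_solve:
  assumes "\<And>i. i < M \<Longrightarrow> (\<Sum>j<M. A $$ (i,j) * y j) = u i"
  shows "sesq M A w y = (\<Sum>i<M. cnj (w i) * u i)"
  unfolding sesq_def
proof (rule sum.cong[OF refl])
  fix i assume "i \<in> {..<M}"
  then have "(\<Sum>j<M. A $$ (i,j) * y j) = u i" using assms by simp
  then show "(\<Sum>j<M. cnj (w i) * A $$ (i, j) * y j) = cnj (w i) * u i"
    by (simp add: sum_distrib_left[symmetric] mult.assoc)
qed

definition Vc :: "nat \<Rightarrow> complex mat \<Rightarrow> real \<Rightarrow> nat \<Rightarrow> complex mat" where
  "Vc M H c k = mat M 1 (\<lambda>(i,j). complex_of_real c * H $$ (i, k-1))"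
definition Wk :: "nat \<Rightarrow> complex mat \<Rightarrow> nat \<Rightarrow> complex mat" where
  "Wk M H k = mat 1 M (\<lambda>(i,j). cnj (H $$ (j, k-1)))"
definition yv :: "nat \<Rightarrow> complex mat \<Rightarrow> complex mat \<Rightarrow> nat \<Rightarrow> nat \<Rightarrow> complex" where
  "yv M H Bi k = (\<lambda>i. \<Sum>l<M. Bi $$ (i,l) * H $$ (l, k-1))"

lemma Vc_carrier: "Vc M H c k \<in> carrier_mat M 1" unfolding Vc_def by auto
lemma Wk_carrier: "Wk M H k \<in> carrier_mat 1 M" unfolding Wk_def by auto

lemma Bm_insert:
  assumes "finite S" "k \<notin> S" "dim_row H = M"
  shows "Bm M H c (insert k S) = Bm M H c S + Vc M H c k * Wk M H k"
proof (rule eq_matI)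
  fix i j assume i: "i < dim_row (Bm M H c S + Vc M H c k * Wk M H k)"
    and j: "j < dim_col (Bm M H c S + Vc M H c k * Wk M H k)"
  have i': "i < M" and j': "j < M" using i j Bm_carrier[of M H c S] Vc_carrier[of M H c k] Wk_carrier[of M H k] by auto
  have "(Vc M H c k * Wk M H k) $$ (i,j) = complex_of_real c * (H $$ (i, k-1) * cnj (H $$ (j, k-1)))"
    using i' j' by (simp add: Vc_def Wk_def scalar_prod_def)
  then show "Bm M H c (insert k S) $$ (i, j) = (Bm M H c S + Vc M H c k * Wk M H k) $$ (i, j)"
    using i' j' assms Vc_carrier[of M H c k] Wk_carrier[of M H k] Bm_carrier[of M H c S]
    by (simp add: Bm_entry distrib_left)
qed (insert Bm_carrier[of M H c] Vc_carrier[of M H c k] Wk_carrier[of M H k], auto)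

lemma WBV_entry:
  assumes Bi: "Bi \<in> carrier_mat M M"
  shows "(Wk M H k * Bi * Vc M H c k) $$ (0,0) = complex_of_real c * (\<Sum>i<M. cnj (H $$ (i, k-1)) * yv M H Bi k i)"
proof -
  have "(Wk M H k * Bi * Vc M H c k) $$ (0,0) =
     (\<Sum>l<M. (\<Sum>i<M. cnj (H $$ (i, k-1)) * Bi $$ (i,l)) * (complex_of_real c * H $$ (l, k-1)))"
    using Bi by (simp add: Vc_def Wk_def scalar_prod_def atLeast0LessThan)
  also have "\<dots> = (\<Sum>l<M. \<Sum>i<M. complex_of_real c * (cnj (H $$ (i, k-1)) * (Bi $$ (i,l) * H $$ (l, k-1))))"
    by (simp only: sum_distrib_right) (simp add: mult_ac)
  also have "\<dots> = (\<Sum>i<M. \<Sum>l<M. complex_of_real c * (cnj (H $$ (i, k-1)) * (Bi $$ (i,l) * H $$ (l, k-1))))"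
    by (rule sum.swap)
  also have "\<dots> = complex_of_real c * (\<Sum>i<M. cnj (H $$ (i, k-1)) * yv M H Bi k i)"
    by (simp add: yv_def sum_distrib_left)
  finally show ?thesis .
qed

lemma yv_solve:
  assumes "Bi \<in> carrier_mat M M" "B \<in> carrier_mat M M" "B * Bi = 1\<^sub>m M" "i < M"
  shows "(\<Sum>j<M. B $$ (i,j) * yv M H Bi k j) = H $$ (i, k-1)"
proof -
  have "(\<Sum>j<M. B $$ (i,j) * yv M H Bi k j) = (\<Sum>l<M. (\<Sum>j<M. B $$ (i,j) * Bi $$ (j,l)) * H $$ (l, k-1))"
    unfolding yv_def by (simp add: sum_distrib_left sum_distrib_right mult.assoc, rule sum.swap)
  also have "\<dots> = (\<Sum>l<M. (B * Bi) $$ (i,l) * H $$ (l, k-1))"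
    using assms(1,2,4) by (intro sum.cong refl) (simp add: scalar_prod_def atLeast0LessThan)
  also have "\<dots> = (\<Sum>l<M. (if l = i then H $$ (i, k-1) else 0))"
    using assms(4) by (intro sum.cong refl) (simp add: assms(3))
  also have "\<dots> = H $$ (i, k-1)" using assms by simp
  finally show ?thesis .
qed

definition Bi_of :: "nat \<Rightarrow> complex mat \<Rightarrow> real \<Rightarrow> nat set \<Rightarrow> complex mat" where
  "Bi_of M H c S = the (mat_inverse (Bm M H c S))"
definition phi :: "nat \<Rightarrow> complex mat \<Rightarrow> real \<Rightarrow> nat set \<Rightarrow> nat \<Rightarrow> real" where
  "phi M H c S k = qr M H c S (yv M H (Bi_of M H c S) k)"

lemma inv_facts:
  assumes "det (Bm M H c S) \<noteq> 0"
  shows "mat_inverse (Bm M H c S) = Some (Bi_of M H c S)"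
    "Bi_of M H c S \<in> carrier_mat M M" "Bm M H c S * Bi_of M H c S = 1\<^sub>m M"
    "Bi_of M H c S * Bm M H c S = 1\<^sub>m M"
proof -
  have U: "Bm M H c S \<in> Units (ring_mat TYPE(complex) M ())"
    by (rule det_non_zero_imp_unit[OF Bm_carrier assms])
  show S: "mat_inverse (Bm M H c S) = Some (Bi_of M H c S)"
  proof (cases "mat_inverse (Bm M H c S)")
    case None
    with mat_inverse(1)[OF Bm_carrier, of M H c S, where b = "()"] U show ?thesis by auto
  next
    case (Some B) then show ?thesis unfolding Bi_of_def by simp
  qed
  from mat_inverse(2)[OF Bm_carrier S]
  show "Bi_of M H c S \<in> carrier_mat M M" "Bm M H c S * Bi_of M H c S = 1\<^sub>m M"
    "Bi_of M H c S * Bm M H c S = 1\<^sub>m M" by auto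
qed

lemma phi_eq:
  assumes "finite S" "dim_row H = M" "det (Bm M H c S) \<noteq> 0"
  shows "(\<Sum>i<M. cnj (H $$ (i, k-1)) * yv M H (Bi_of M H c S) k i) = complex_of_real (phi M H c S k)"
proof -
  let ?y = "yv M H (Bi_of M H c S) k"
  note I = inv_facts[OF assms(3)]
  have "sesq M (Bm M H c S) ?y ?y = (\<Sum>i<M. cnj (?y i) * H $$ (i, k-1))"
    by (rule sesq_solve, rule yv_solve[OF I(2) Bm_carrier I(3)])
  also have "\<dots> = cnj (\<Sum>i<M. cnj (H $$ (i, k-1)) * ?y i)" by (simp add: cnj_sum mult.commute)
  finally have "cnj (\<Sum>i<M. cnj (H $$ (i, k-1)) * ?y i) = complex_of_real (phi M H c S k)"
    unfolding sesq_Bm[OF assms(1,2)] phi_def by simp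
  then show ?thesis by (metis complex_cnj_cnj complex_cnj_complex_of_real)
qed

lemma det_step:
  assumes "finite S" "k \<notin> S" "dim_row H = M" "det (Bm M H c S) \<noteq> 0"
  shows "det (Bm M H c (insert k S)) = det (Bm M H c S) * complex_of_real (1 + c * phi M H c S k)"
proof -
  note I = inv_facts[OF assms(4)]
  have "det (Bm M H c (insert k S)) = det (Bm M H c S) * (1 + (Wk M H k * Bi_of M H c S * Vc M H c k) $$ (0,0))"
    unfolding Bm_insert[OF assms(1-3)]
    by (rule det_rank_one[OF Bm_carrier I(2) I(4) Vc_carrier Wk_carrier])
  also have "(Wk M H k * Bi_of M H c S * Vc M H c k) $$ (0,0) = complex_of_real (c * phi M H c S k)"
    by (subst WBV_entry[OF I(2)], subst phi_eq[OF assms(1,3,4)], simp)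
  finally show ?thesis by simp
qed

lemma Bm_empty: "dim_row H = M \<Longrightarrow> Bm M H c {} = 1\<^sub>m M"
  by (rule eq_matI) (insert Bm_carrier[of M H c "{}"], auto simp: Bm_entry)

lemma det_pos:
  assumes "finite S" "dim_row H = M" "c \<ge> 0"
  shows "det (Bm M H c S) = complex_of_real (Re (det (Bm M H c S))) \<and> Re (det (Bm M H c S)) \<ge> 1"
  using assms(1)
proof (induction S rule: finite_induct)
  case empty
  then show ?case using Bm_empty[OF assms(2)] by simp
next
  case (insert k S)
  let ?d = "Re (det (Bm M H c S))"
  have d: "det (Bm M H c S) = complex_of_real ?d" "?d \<ge> 1" using insert by auto
  have p: "phi M H c S k \<ge> 0" unfolding phi_def using qr_nonneg assms(3) by blast
  have ne: "det (Bm M H c S) \<noteq> 0" using d by auto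
  have e: "det (Bm M H c (insert k S)) = complex_of_real (?d * (1 + c * phi M H c S k))"
    by (subst det_step[OF insert(1,2) assms(2) ne], subst d(1), simp)
  have "?d * (1 + c * phi M H c S k) \<ge> 1 * 1"
    using d(2) p assms(3) by (intro mult_mono) auto
  then show ?case using e by simp
qed

definition ell :: "nat \<Rightarrow> complex mat \<Rightarrow> real \<Rightarrow> nat set \<Rightarrow> real" where
  "ell M H c S = log 2 (Re (det (Bm M H c S)))"

lemma phi_mono:
  assumes Z: "finite Z" and YZ: "Y \<subseteq> Z" and HM: "dim_row H = M" and c: "c \<ge> 0"
  shows "phi M H c Z k \<le> phi M H c Y k"
proof -
  have Y: "finite Y" using Z YZ finite_subset by auto
  have nY: "det (Bm M H c Y) \<noteq> 0" using det_pos[OF Y HM c] by auto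
  have nZ: "det (Bm M H c Z) \<noteq> 0" using det_pos[OF Z HM c] by auto
  note IY = inv_facts[OF nY]
  let ?B = "Bm M H c Y"
  let ?y = "yv M H (Bi_of M H c Y) k"
  let ?z = "yv M H (Bi_of M H c Z) k"
  let ?u = "\<lambda>i. H $$ (i, k-1)"
  have solY: "\<And>i. i < M \<Longrightarrow> (\<Sum>j<M. ?B $$ (i,j) * ?y j) = ?u i"
    by (rule yv_solve[OF IY(2) Bm_carrier IY(3)])
  have herm: "\<And>i j. i < M \<Longrightarrow> j < M \<Longrightarrow> ?B $$ (j,i) = cnj (?B $$ (i,j))"
    by (rule Bm_herm[OF Y _ _ HM])
  have s1: "sesq M ?B ?z ?y = complex_of_real (phi M H c Z k)"
  proof -
    have "sesq M ?B ?z ?y = (\<Sum>i<M. cnj (?z i) * ?u i)" by (rule sesq_solve[OF solY])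
    also have "\<dots> = cnj (\<Sum>i<M. cnj (?u i) * ?z i)" by (simp add: cnj_sum mult.commute)
    also have "\<dots> = complex_of_real (phi M H c Z k)"
      by (subst phi_eq[OF Z HM nZ], simp)
    finally show ?thesis .
  qed
  have s2: "sesq M ?B ?y ?z = complex_of_real (phi M H c Z k)"
    by (subst sesq_herm[OF herm], auto simp: s1)
  have s3: "sesq M ?B ?z ?z = complex_of_real (qr M H c Y ?z)" by (rule sesq_Bm[OF Y HM])
  have s4: "sesq M ?B ?y ?y = complex_of_real (phi M H c Y k)"
    unfolding phi_def by (rule sesq_Bm[OF Y HM])
  have s5: "sesq M ?B (\<lambda>i. ?z i - ?y i) (\<lambda>i. ?z i - ?y i) = complex_of_real (qr M H c Y (\<lambda>i. ?z i - ?y i))"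
    by (rule sesq_Bm[OF Y HM])
  have "complex_of_real (qr M H c Y (\<lambda>i. ?z i - ?y i)) =
     complex_of_real (qr M H c Y ?z - phi M H c Z k - phi M H c Z k + phi M H c Y k)"
    using sesq_diff[of M ?B ?z ?y] unfolding s1 s2 s3 s4 s5 by simp
  then have eq: "qr M H c Y (\<lambda>i. ?z i - ?y i) = qr M H c Y ?z - phi M H c Z k - phi M H c Z k + phi M H c Y k"
    using of_real_eq_iff by blast
  have "qr M H c Y (\<lambda>i. ?z i - ?y i) \<ge> 0" by (rule qr_nonneg[OF c])
  moreover have "qr M H c Y ?z \<le> phi M H c Z k" unfolding phi_def by (rule qr_mono[OF c Z YZ])
  ultimately show ?thesis using eq by linarith
qed

lemma dd_pos: "finite S \<Longrightarrow> dim_row H = M \<Longrightarrow> c \<ge> 0 \<Longrightarrow> Re (det (Bm M H c S)) > 0"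
  using det_pos[of S H M c] by auto

lemma ell_step:
  assumes "finite S" "k \<notin> S" "dim_row H = M" "c \<ge> 0"
  shows "ell M H c (insert k S) - ell M H c S = log 2 (1 + c * phi M H c S k)"
proof -
  have ne: "det (Bm M H c S) \<noteq> 0" using det_pos[OF assms(1,3,4)] by auto
  have p: "phi M H c S k \<ge> 0" unfolding phi_def using qr_nonneg assms(4) by blast
  have d: "det (Bm M H c S) = complex_of_real (Re (det (Bm M H c S)))" using det_pos[OF assms(1,3,4)] by auto
  have "Re (det (Bm M H c (insert k S))) = Re (det (Bm M H c S)) * (1 + c * phi M H c S k)"
    by (subst det_step[OF assms(1-3) ne], subst d, simp)
  moreover have "1 + c * phi M H c S k > 0" using p assms(4) by (smt (verit) mult_nonneg_nonneg)
  ultimately show ?thesis unfolding ell_def using dd_pos[OF assms(1,3,4)]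
    by (simp add: log_mult)
qed

lemma ell_mono:
  assumes "finite Z" "Y \<subseteq> Z" "k \<notin> Z" "dim_row H = M" "c \<ge> 0"
  shows "ell M H c (insert k Z) - ell M H c Z \<le> ell M H c (insert k Y) - ell M H c Y"
proof -
  have Y: "finite Y" "k \<notin> Y" using assms finite_subset by auto
  have p: "phi M H c Z k \<ge> 0" unfolding phi_def using qr_nonneg assms(5) by blast
  have "c * phi M H c Z k \<le> c * phi M H c Y k"
    by (rule mult_left_mono[OF phi_mono[OF assms(1,2,4,5)] assms(5)])
  then have "log 2 (1 + c * phi M H c Z k) \<le> log 2 (1 + c * phi M H c Y k)"
    using mult_nonneg_nonneg[OF assms(5) p] by (subst log_le_cancel_iff) auto
  then show ?thesis unfolding ell_step[OF assms(1,3,4,5)] ell_step[OF Y assms(4,5)] .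
qed

lemma Bm_union:
  assumes "finite X" "finite Y" "X \<inter> Y = {}" "dim_row H = M"
  shows "Bm M H c (X \<union> Y) = Bm M H c Y + complex_of_real c \<cdot>\<^sub>m gram M H X"
proof (rule eq_matI)
  fix i j assume i: "i < dim_row (Bm M H c Y + complex_of_real c \<cdot>\<^sub>m gram M H X)"
    and j: "j < dim_col (Bm M H c Y + complex_of_real c \<cdot>\<^sub>m gram M H X)"
  have i': "i < M" and j': "j < M" using i j Bm_carrier[of M H c Y] gram_carrier[of M H X] by auto
  show "Bm M H c (X \<union> Y) $$ (i, j) = (Bm M H c Y + complex_of_real c \<cdot>\<^sub>m gram M H X) $$ (i, j)"
    using i' j' assms Bm_carrier[of M H c Y] gram_carrier[of M H X]
    by (simp add: Bm_entry gram_entry sum.union_disjoint distrib_left)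
qed (insert Bm_carrier[of M H c] gram_carrier[of M H X], auto)

lemma rate_ell:
  assumes "finite X" "finite Y" "X \<inter> Y = {}" "dim_row H = M" "P > 0" "N0 > 0"
  shows "rate M H P N0 X Y = ell M H (P/N0) (X \<union> Y) - ell M H (P/N0) Y"
proof -
  define c where "c = P / N0"
  have c: "c \<ge> 0" unfolding c_def using assms by simp
  have ne: "det (Bm M H c Y) \<noteq> 0" using det_pos[OF assms(2,4) c] by auto
  note I = inv_facts[OF ne]
  let ?G = "complex_of_real c \<cdot>\<^sub>m gram M H X"
  have G: "?G \<in> carrier_mat M M" using gram_carrier by auto
  have r: "rate M H P N0 X Y = log 2 (Re (det (1\<^sub>m M + ?G * Bi_of M H c Y)))"
    unfolding rate_def Bi_of_def Bm_def c_def ..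
  have "1\<^sub>m M + ?G * Bi_of M H c Y = (Bm M H c Y + ?G) * Bi_of M H c Y"
    by (subst add_mult_distrib_mat[OF Bm_carrier G I(2)], simp add: I(3))
  also have "\<dots> = Bm M H c (X \<union> Y) * Bi_of M H c Y" by (simp add: Bm_union[OF assms(1-4)])
  finally have e: "det (1\<^sub>m M + ?G * Bi_of M H c Y) = det (Bm M H c (X \<union> Y)) * det (Bi_of M H c Y)"
    using det_mult[OF Bm_carrier I(2)] by simp
  have "det (Bm M H c Y) * det (Bi_of M H c Y) = 1"
    using det_mult[OF Bm_carrier[of M H c Y] I(2)] I(3) by simp
  then have dBi: "det (Bi_of M H c Y) = 1 / det (Bm M H c Y)" using ne by (simp add: field_simps)
  have XY: "finite (X \<union> Y)" using assms by auto
  have dXY: "det (Bm M H c (X \<union> Y)) = complex_of_real (Re (det (Bm M H c (X \<union> Y))))"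
    using det_pos[OF XY assms(4) c] by auto
  have dY: "det (Bm M H c Y) = complex_of_real (Re (det (Bm M H c Y)))"
    using det_pos[OF assms(2,4) c] by auto
  have "Re (det (1\<^sub>m M + ?G * Bi_of M H c Y)) = Re (det (Bm M H c (X \<union> Y))) / Re (det (Bm M H c Y))"
    unfolding e dBi by (subst dXY, subst dY, simp)
  then have "rate M H P N0 X Y = log 2 (Re (det (Bm M H c (X \<union> Y))) / Re (det (Bm M H c Y)))"
    using r by simp
  also have "\<dots> = ell M H c (X \<union> Y) - ell M H c Y"
    unfolding ell_def using dd_pos[OF XY assms(4) c] dd_pos[OF assms(2,4) c] by (simp add: log_divide)
  finally show ?thesis unfolding c_def .
qed

theorem lemmaV1:
  fixes M K :: nat and H :: "complex mat" and P N0 :: real and r :: "nat \<Rightarrow> real"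
    and Shat :: "nat set" and uo up :: nat
  assumes "M \<ge> 1" and "K \<ge> 1" and "H \<in> carrier_mat M K"
    and "P > 0" and "N0 > 0"
    and "\<forall>k\<in>{1..K}. r k \<ge> 0"
    and "Shat \<subseteq> {1..K}"
    and "uo \<in> {1..K}" and "up \<in> {1..K}" and "uo \<noteq> up"
    and "uo \<notin> Shat" and "up \<notin> Shat"
    and "rate M H P N0 {uo} Shat \<ge> r uo"
    and "rate M H P N0 {up} Shat \<ge> r up"
    and "rate M H P N0 {uo, up} Shat < r uo + r up"
  shows "\<not> (\<exists>Sstar. Sstar \<subseteq> {1..K} - Shat \<and> Sstar \<inter> {uo, up} \<noteq> {} \<and>
            (\<forall>S. S \<subseteq> Sstar \<longrightarrow>
               (\<Sum>k\<in>S. r k) \<le> rate M H P N0 S ({1..K} - Sstar)))"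
proof
  assume "\<exists>Sstar. Sstar \<subseteq> {1..K} - Shat \<and> Sstar \<inter> {uo, up} \<noteq> {} \<and>
            (\<forall>S. S \<subseteq> Sstar \<longrightarrow>
               (\<Sum>k\<in>S. r k) \<le> rate M H P N0 S ({1..K} - Sstar))"
  then obtain Sstar where ss: "Sstar \<subseteq> {1..K} - Shat" "Sstar \<inter> {uo, up} \<noteq> {}"
    and all: "\<And>S. S \<subseteq> Sstar \<Longrightarrow> (\<Sum>k\<in>S. r k) \<le> rate M H P N0 S ({1..K} - Sstar)"
    by blast
  define T where "T = {1..K} - Sstar"
  define c where "c = P / N0"
  have c: "c \<ge> 0" unfolding c_def using assms(4,5) by simp
  have HM: "dim_row H = M" using assms(3) by simp
  have fT: "finite T" unfolding T_def by simp
  have fS: "finite Shat" using assms(7) finite_subset by blast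
  have ShT: "Shat \<subseteq> T" unfolding T_def using ss(1) assms(7) by blast
  let ?l = "ell M H c"
  have rS_op: "rate M H P N0 {uo, up} Shat = ?l (insert uo (insert up Shat)) - ?l Shat"
    using rate_ell[of "{uo,up}" Shat H M P N0] assms(4,5,11,12) fS HM unfolding c_def by simp
  have rS_o: "rate M H P N0 {uo} Shat = ?l (insert uo Shat) - ?l Shat"
    using rate_ell[of "{uo}" Shat H M P N0] assms(4,5,11,12) fS HM unfolding c_def by simp
  have rS_p: "rate M H P N0 {up} Shat = ?l (insert up Shat) - ?l Shat"
    using rate_ell[of "{up}" Shat H M P N0] assms(4,5,11,12) fS HM unfolding c_def by simp
  show False
  proof (cases "uo \<in> Sstar")
    case o: True
    show False
    proof (cases "up \<in> Sstar")
      case p: True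
      have nT: "uo \<notin> T" "up \<notin> T" unfolding T_def using o p by auto
      have rT: "rate M H P N0 {uo, up} T = ?l (insert uo (insert up T)) - ?l T"
        using rate_ell[of "{uo,up}" T H M P N0] assms(4,5) nT fT HM unfolding c_def by simp
      have m1: "?l (insert uo (insert up T)) - ?l (insert up T) \<le> ?l (insert uo (insert up Shat)) - ?l (insert up Shat)"
        using ell_mono[of "insert up T" "insert up Shat" uo H M c] fT ShT nT assms(10) HM c by auto
      have m2: "?l (insert up T) - ?l T \<le> ?l (insert up Shat) - ?l Shat"
        using ell_mono[OF fT ShT nT(2) HM c] .
      have "(\<Sum>k\<in>{uo,up}. r k) \<le> rate M H P N0 {uo,up} T"
        using all[of "{uo,up}"] o p unfolding T_def by auto
      then have "r uo + r up \<le> rate M H P N0 {uo,up} T" using assms(10) by simp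
      then show False using rT m1 m2 rS_op assms(15) by linarith
    next
      case p: False
      have nT: "uo \<notin> T" "up \<in> T" unfolding T_def using o p assms(9) by auto
      have rT: "rate M H P N0 {uo} T = ?l (insert uo T) - ?l T"
        using rate_ell[of "{uo}" T H M P N0] assms(4,5) nT fT HM unfolding c_def by simp
      have m: "?l (insert uo T) - ?l T \<le> ?l (insert uo (insert up Shat)) - ?l (insert up Shat)"
        using ell_mono[of T "insert up Shat" uo H M c] fT ShT nT HM c by auto
      have "r uo \<le> rate M H P N0 {uo} T" using all[of "{uo}"] o unfolding T_def by auto
      then show False using rT m rS_op rS_p assms(14,15) by linarith
    qed
  next
    case o: False
    then have p: "up \<in> Sstar" using ss(2) by auto
    have nT: "up \<notin> T" "uo \<in> T" unfolding T_def using o p assms(8) by auto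
    have rT: "rate M H P N0 {up} T = ?l (insert up T) - ?l T"
      using rate_ell[of "{up}" T H M P N0] assms(4,5) nT fT HM unfolding c_def by simp
    have m: "?l (insert up T) - ?l T \<le> ?l (insert up (insert uo Shat)) - ?l (insert uo Shat)"
      using ell_mono[of T "insert uo Shat" up H M c] fT ShT nT HM c by auto
    have "r up \<le> rate M H P N0 {up} T" using all[of "{up}"] p unfolding T_def by auto
    then show False using rT m rS_op rS_o assms(13,15) by (simp add: insert_commute)
  qed
qed

end
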